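(* Let $q>1$, $p=\frac{q}{q-1}$, and assume Hypothesis (H$_q$). Then for every $\theta>0$, $$\Big|f\Big(\frac{m(a+b)}{2}\Big)-\frac{\Gamma(\theta+1)2^{\theta-1}}{m^\theta(b-a)^\theta}\Big[J^\theta_{(\frac{m(a+b)}{2})^-}f(ma)+J^\theta_{(\frac{m(a+b)}{2})^+}f(mb)\Big]\Big|$$ $$\le\frac{m(b-a)}{4}\Big(\frac{1}{\theta p+1}\Big)^{\frac1p}\Big\{\Big(\frac{|f'(\frac{m(a+b)}2)|^q+\alpha m|f'(a)|^q}{\alpha+1}\Big)^{\frac1q}+\Big(\frac{|f'(\frac{m(a+b)}2)|^q+\alpha m|f'(b)|^q}{\alpha+1}\Big)^{\frac1q}\Big\}.$$
   Context: Let $\Gamma$ denote Euler's Gamma function. For $\theta>0$, $c=\frac{m(a+b)}{2}$: $J^\theta_{c^-}f(ma)=\frac{1}{\Gamma(\theta)}\int_{ma}^{c}(s-ma)^{\theta-1}f(s)\,ds$ and $J^\theta_{c^+}f(mb)=\frac{1}{\Gamma(\theta)}\int_{c}^{mb}(mb-s)^{\theta-1}f(s)\,ds$. $(\alpha,m)$-convexity: for $(\alpha,m)\in[0,1]\times(0,1]$ and an interval $K\subseteq[0,\infty)$, a function $g:K\to\mathbb{R}$ is $(\alpha,m)$-convex on $K$ if $g(tX+m(1-t)Y)\le t^\alpha g(X)+m(1-t^\alpha)g(Y)$ for all $X,Y\in K$ and $t\in[0,1]$ with $tX+m(1-t)Y\in K$ (convention $0^0=1$). Hypothesis (H$_q$):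 $I\subseteq[0,\infty)$ is an interval, $f:I\to\mathbb{R}$ is differentiable on the interior $I^\circ$, $m\in(0,1]$, $\alpha\in[0,1]$, $a<b$ with $ma,b\in I^\circ$, $f'$ is Lebesgue integrable on $[ma,mb]$, and $|f'|^q$ is $(\alpha,m)$-convex on $[ma,b]$. *)

theory Defs
  imports "HOL-Analysis.Analysis"
begin

text \<open>Power t^alpha with the convention 0^0 = 1 (Isabelle's powr has 0 powr 0 = 0).\<close>
definition pw0 :: "real \<Rightarrow> real \<Rightarrow> real" where
  "pw0 t \<alpha> = (if t = 0 then (if \<alpha> = 0 then 1 else 0) else t powr \<alpha>)"

definition alpha_m_convex :: "real \<Rightarrow> real \<Rightarrow> real set \<Rightarrow> (real \<Rightarrow> real) \<Rightarrow> bool" where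
  "alpha_m_convex \<alpha> m K g \<longleftrightarrow>
     (\<forall>X\<in>K. \<forall>Y\<in>K. \<forall>t\<in>{0..1}. t * X + m * (1 - t) * Y \<in> K \<longrightarrow>
        g (t * X + m * (1 - t) * Y) \<le> pw0 t \<alpha> * g X + m * (1 - pw0 t \<alpha>) * g Y)"

definition RL_minus :: "real \<Rightarrow> real \<Rightarrow> (real \<Rightarrow> real) \<Rightarrow> real \<Rightarrow> real" where
  "RL_minus \<theta> c f x = (1 / Gamma \<theta>) * (LINT s:{x..c}|lborel. (s - x) powr (\<theta> - 1) * f s)"

definition RL_plus :: "real \<Rightarrow> real \<Rightarrow> (real \<Rightarrow> real) \<Rightarrow> real \<Rightarrow> real" where
  "RL_plus \<theta> c f x = (1 / Gamma \<theta>) * (LINT s:{c..x}|lborel. (x - s) powr (\<theta> - 1) * f s)"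

end

theory Submission
  imports Defs "HOL-Analysis.Analysis"
begin


lemma real_holder_opt:
  fixes X U W p q :: real
  assumes p: "p > 1" and q: "q > 1" and pq: "1/p + 1/q = 1" and U: "U > 0" and W: "W \<ge> 0"
    and H: "\<And>e. e > 0 \<Longrightarrow> X \<le> e powr p * U / p + W / (q * e powr q)"
  shows "X \<le> U powr (1/p) * W powr (1/q)"
proof (cases "W = 0")
  case True
  show ?thesis
  proof (rule ccontr)
    assume "\<not> ?thesis"
    then have X: "X > 0" using True by simp
    define e where "e = (X * p / (2*U)) powr (1/p)"
    have e0: "e > 0" using X p U by (simp add: e_def)
    have "e powr p = X * p / (2*U)" unfolding e_def using X p U
      by (simp add: powr_powr)
    then have "e powr p * U / p + W / (q * e powr q) = X/2" using True p U by simp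
    with H[OF e0] X show False by simp
  qed
next
  case False
  then have W0: "W > 0" using W by simp
  have pq2: "p + q = p * q" using pq p q by (simp add: field_simps)
  define e where "e = (W/U) powr (1/(p+q))"
  have e0: "e > 0" using W0 U by (simp add: e_def)
  have ep: "e powr p = (W/U) powr (1/q)" unfolding e_def using W0 U p q pq2
    by (simp add: powr_powr)
  have eq: "e powr q = (W/U) powr (1/p)" unfolding e_def using W0 U p q pq2
    by (simp add: powr_powr)
  have 1: "e powr p * U = U powr (1/p) * W powr (1/q)"
    unfolding ep using W0 U pq by (simp add: powr_divide powr_diff[symmetric] field_simps flip: powr_add)
  have 2: "W / e powr q = U powr (1/p) * W powr (1/q)"
    unfolding eq using W0 U pq by (simp add: powr_divide field_simps flip: powr_add)
  have "e powr p * U / p + W / (q * e powr q) = (U powr (1/p) * W powr (1/q)) * (1/p + 1/q)"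
  proof -
    have "e powr p * U / p + W / (q * e powr q) = (e powr p * U) / p + (W / e powr q) / q"
      by simp
    also have "\<dots> = (U powr (1/p) * W powr (1/q)) * (1/p + 1/q)" unfolding 1 2 by (simp add: field_simps)
    finally show ?thesis .
  qed
  with H[OF e0] pq show ?thesis by simp
qed

lemma young_eps:
  fixes x y e p q :: real
  assumes p: "p > 1" and q: "q > 1" and pq: "1/p + 1/q = 1" and e: "e > 0" and x: "x \<ge> 0" and y: "y \<ge> 0"
  shows "x * y \<le> e powr p * x powr p / p + y powr q / (q * e powr q)"
proof -
  have "(e*x) * (y/e) \<le> (e*x) powr p / p + (y/e) powr q / q"
    using Youngs_inequality[OF p q pq, of "e*x" "y/e"] e x y by simp
  also have "\<dots> = e powr p * x powr p / p + y powr q / (q * e powr q)"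
    using e x y by (simp add: powr_mult powr_divide)
  finally show ?thesis using e by simp
qed

lemma holder_piece:
  fixes w g :: "real \<Rightarrow> real" and lo hi U W p q :: real
  assumes p: "p > 1" and q: "q > 1" and pq: "1/p + 1/q = 1"
   and wint: "((\<lambda>s. w s powr p) has_integral U) {lo..hi}" and U: "U > 0"
   and w0: "\<And>s. s \<in> {lo..hi} \<Longrightarrow> w s \<ge> 0" and wc: "continuous_on {lo..hi} w"
   and gm: "g \<in> borel_measurable (lebesgue_on {lo..hi})"
   and gq: "(\<lambda>s. \<bar>g s\<bar> powr q) integrable_on {lo..hi}"
   and gW: "integral {lo..hi} (\<lambda>s. \<bar>g s\<bar> powr q) \<le> W"
  shows "(\<lambda>s. w s * \<bar>g s\<bar>) integrable_on {lo..hi}"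
    and "integral {lo..hi} (\<lambda>s. w s * \<bar>g s\<bar>) \<le> U powr (1/p) * W powr (1/q)"
proof -
  have wi: "(\<lambda>s. w s powr p) integrable_on {lo..hi}" using wint by blast
  have W0: "W \<ge> 0"
    using gW integral_nonneg[OF gq] by (smt (verit) powr_ge_zero)
  have wm: "w \<in> borel_measurable (lebesgue_on {lo..hi})"
    using wc by (simp add: continuous_imp_measurable_on_sets_lebesgue)
  have pm: "(\<lambda>s. w s * \<bar>g s\<bar>) \<in> borel_measurable (lebesgue_on {lo..hi})"
    using wm gm by measurable
  have bi: "(\<lambda>s. 1 powr p * w s powr p / p + \<bar>g s\<bar> powr q / (q * 1 powr q)) integrable_on {lo..hi}"
    using wi gq by (intro integrable_add integrable_on_divide) auto
  show I: "(\<lambda>s. w s * \<bar>g s\<bar>) integrable_on {lo..hi}"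
  proof (rule measurable_bounded_by_integrable_imp_integrable[OF pm bi])
    fix s assume s: "s \<in> {lo..hi}"
    have "w s * \<bar>g s\<bar> \<le> 1 powr p * w s powr p / p + \<bar>g s\<bar> powr q / (q * 1 powr q)"
      by (rule young_eps[OF p q pq]) (use w0[OF s] in auto)
    then show "norm (w s * \<bar>g s\<bar>) \<le> 1 powr p * w s powr p / p + \<bar>g s\<bar> powr q / (q * 1 powr q)"
      using w0[OF s] by simp
  qed auto
  show "integral {lo..hi} (\<lambda>s. w s * \<bar>g s\<bar>) \<le> U powr (1/p) * W powr (1/q)"
  proof (rule real_holder_opt[OF p q pq U W0])
    fix e :: real assume e: "e > 0"
    have bi: "(\<lambda>s. e powr p * w s powr p / p + \<bar>g s\<bar> powr q / (q * e powr q)) integrable_on {lo..hi}"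
      using wi gq by (intro integrable_add integrable_on_divide integrable_on_mult_right) auto
    have "integral {lo..hi} (\<lambda>s. w s * \<bar>g s\<bar>) \<le> integral {lo..hi} (\<lambda>s. e powr p * w s powr p / p + \<bar>g s\<bar> powr q / (q * e powr q))"
      by (rule integral_le[OF I bi]) (rule young_eps[OF p q pq e], use w0 in auto)
    also have "\<dots> = e powr p * U / p + integral {lo..hi} (\<lambda>s. \<bar>g s\<bar> powr q) / (q * e powr q)"
      using wi gq wint by (simp add: integral_add integrable_on_divide integrable_on_mult_right integral_unique)
    also have "\<dots> \<le> e powr p * U / p + W / (q * e powr q)"
      using gW e q by (intro add_left_mono divide_right_mono) auto
    finally show "integral {lo..hi} (\<lambda>s. w s * \<bar>g s\<bar>) \<le> e powr p * U / p + W / (q * e powr q)" .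
  qed
qed

lemma deriv_shift_powr:
  fixes L x r :: real
  assumes "x > L"
  shows "((\<lambda>s. (s - L) powr r) has_real_derivative r * (x - L) powr (r - 1)) (at x)"
  using DERIV_fun_powr[of "\<lambda>s. s - L" x 1 r] assms
  by (auto intro!: derivative_eq_intros)

lemma deriv_refl_powr:
  fixes R x r :: real
  assumes "x < R"
  shows "((\<lambda>s. (R - s) powr r) has_real_derivative - (r * (R - x) powr (r - 1))) (at x)"
  using DERIV_fun_powr[of "\<lambda>s. R - s" x "-1" r] assms
  by (auto intro!: derivative_eq_intros)

lemma cont_shift_powr:
  fixes L r :: real
  assumes "r > 0"
  shows "continuous_on S (\<lambda>s. \<bar>s - L\<bar> powr r)"
  using assms by (intro continuous_on_powr') (auto intro!: continuous_intros)



lemma left_piece: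
  fixes f f' :: "real \<Rightarrow> real" and L c h \<theta> p q \<alpha> m A B :: real
  assumes Lc: "L < c" and hdef: "h = c - L" and th: "\<theta> > 0"
   and p: "p > 1" and q: "q > 1" and pq: "1/p + 1/q = 1"
   and al: "0 \<le> \<alpha>" and m: "0 \<le> m" and A: "0 \<le> A" and B: "0 \<le> B"
   and der: "\<And>x. x \<in> {L..c} \<Longrightarrow> (f has_real_derivative f' x) (at x)"
   and fi: "f' integrable_on {L..c}"
   and bd: "\<And>s. s \<in> {L..c} \<Longrightarrow> \<bar>f' s\<bar> powr q \<le> m*B + pw0 ((s-L)/h) \<alpha> * (A - m*B)"
  shows "set_integrable lborel {L..c} (\<lambda>s. (s-L) powr (\<theta>-1) * f s)"
   and "(LINT s:{L..c}|lborel. (s-L) powr (\<theta>-1) * f s)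
          = h powr \<theta> / \<theta> * f c - integral {L..c} (\<lambda>s. (s-L) powr \<theta> * f' s) / \<theta>"
   and "\<bar>integral {L..c} (\<lambda>s. (s-L) powr \<theta> * f' s)\<bar>
          \<le> h powr (\<theta>+1) * (1/(\<theta>*p+1)) powr (1/p) * ((A + \<alpha>*m*B)/(\<alpha>+1)) powr (1/q)"
proof -
  have h: "h > 0" using Lc hdef by simp
  have fc: "continuous_on {L..c} f"
    by (rule continuous_at_imp_continuous_on) (use der DERIV_isCont in blast)
  have f'm: "f' \<in> borel_measurable (lebesgue_on {L..c})"
    using integrable_imp_measurable[OF fi] .
  have Pint: "((\<lambda>s. pw0 ((s-L)/h) \<alpha>) has_integral (h/(\<alpha>+1))) {L..c}"
  proof -
    define G where "G s = h/(\<alpha>+1) * ((s-L)/h) powr (\<alpha>+1)" for s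
    have "((\<lambda>s. pw0 ((s-L)/h) \<alpha>) has_integral (G c - G L)) {L..c}"
    proof (rule fundamental_theorem_of_calculus_interior)
      show "continuous_on {L..c} G" unfolding G_def using al h
        by (intro continuous_intros continuous_on_powr') (auto intro!: continuous_intros)
      fix x assume x: "x \<in> {L<..<c}"
      have d: "((\<lambda>s. (s-L)/h) has_real_derivative 1/h) (at x)"
        using h by (auto intro!: derivative_eq_intros)
      have "(G has_real_derivative h/(\<alpha>+1) * ((\<alpha>+1) * ((x-L)/h) powr (\<alpha>+1 - of_nat 1) * (1/h))) (at x)"
        unfolding G_def using x h by (intro DERIV_cmult DERIV_fun_powr[OF d]) auto
      moreover have "h/(\<alpha>+1) * ((\<alpha>+1) * ((x-L)/h) powr (\<alpha>+1 - of_nat 1) * (1/h)) = pw0 ((x-L)/h) \<alpha>"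
        using x h al by (simp add: pw0_def)
      ultimately show "(G has_vector_derivative pw0 ((x-L)/h) \<alpha>) (at x)"
        by (simp add: has_real_derivative_iff_has_vector_derivative)
    qed (use Lc in simp)
    moreover have "G c - G L = h/(\<alpha>+1)" unfolding G_def using h al hdef by simp
    ultimately show ?thesis by simp
  qed
  define Bd where "Bd s = m*B + pw0 ((s-L)/h) \<alpha> * (A - m*B)" for s
  have Bdint: "(Bd has_integral (h*((A + \<alpha>*m*B)/(\<alpha>+1)))) {L..c}"
  proof -
    have cst: "((\<lambda>s. m*B) has_integral ((c-L)*(m*B))) {L..c}"
      using has_integral_const_real[of "m*B" L c] Lc by simp
    have "(Bd has_integral ((c-L)*(m*B) + h/(\<alpha>+1) * (A - m*B))) {L..c}"
      unfolding Bd_def by (intro has_integral_add cst has_integral_mult_left Pint)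
    moreover have "(c-L)*(m*B) + h/(\<alpha>+1) * (A - m*B) = h*((A + \<alpha>*m*B)/(\<alpha>+1))"
      using Lc al by (simp add: hdef field_simps)
    ultimately show ?thesis by simp
  qed
  have qm: "(\<lambda>s. \<bar>f' s\<bar> powr q) \<in> borel_measurable (lebesgue_on {L..c})"
    using f'm by measurable
  have qint: "(\<lambda>s. \<bar>f' s\<bar> powr q) integrable_on {L..c}"
    by (rule measurable_bounded_by_integrable_imp_integrable[OF qm, of Bd])
       (use Bdint bd in \<open>auto simp: Bd_def\<close>)
  have qle: "integral {L..c} (\<lambda>s. \<bar>f' s\<bar> powr q) \<le> h*((A + \<alpha>*m*B)/(\<alpha>+1))"
  proof -
    have "integral {L..c} (\<lambda>s. \<bar>f' s\<bar> powr q) \<le> integral {L..c} Bd"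
      by (rule integral_le[OF qint]) (use Bdint bd in \<open>auto simp: Bd_def\<close>)
    then show ?thesis using Bdint by (simp add: integral_unique)
  qed
  have pos: "\<theta>*p > 0" using th p by simp
  have Wint: "((\<lambda>s. ((s-L) powr \<theta>) powr p) has_integral (h powr (\<theta>*p+1)/(\<theta>*p+1))) {L..c}"
  proof -
    define G where "G s = (s-L) powr (\<theta>*p+1)/(\<theta>*p+1)" for s
    have "((\<lambda>s. ((s-L) powr \<theta>) powr p) has_integral (G c - G L)) {L..c}"
    proof (rule fundamental_theorem_of_calculus_interior)
      show "continuous_on {L..c} G" unfolding G_def using pos
        by (intro continuous_intros continuous_on_powr') (auto intro!: continuous_intros)
      fix x assume x: "x \<in> {L<..<c}"
      have "(G has_real_derivative ((\<theta>*p+1) * (x-L) powr (\<theta>*p+1-1)) / (\<theta>*p+1)) (at x)"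
        unfolding G_def using x by (intro DERIV_cdivide deriv_shift_powr) auto
      moreover have "((\<theta>*p+1) * (x-L) powr (\<theta>*p+1-1)) / (\<theta>*p+1) = ((x-L) powr \<theta>) powr p"
        using pos by (simp add: powr_powr)
      ultimately show "(G has_vector_derivative ((x-L) powr \<theta>) powr p) (at x)"
        by (simp add: has_real_derivative_iff_has_vector_derivative)
    qed (use Lc in simp)
    moreover have "G c - G L = h powr (\<theta>*p+1)/(\<theta>*p+1)" unfolding G_def using pos hdef by simp
    ultimately show ?thesis by simp
  qed
  have wc: "continuous_on {L..c} (\<lambda>s. (s-L) powr \<theta>)"
    using th by (intro continuous_on_powr') (auto intro!: continuous_intros)
  have U: "h powr (\<theta>*p+1)/(\<theta>*p+1) > 0" using h pos by simp
  note H = holder_piece[OF p q pq Wint U _ wc f'm qint qle]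
  have H1: "(\<lambda>s. (s-L) powr \<theta> * \<bar>f' s\<bar>) integrable_on {L..c}" using H(1) by simp
  have H2: "integral {L..c} (\<lambda>s. (s-L) powr \<theta> * \<bar>f' s\<bar>)
      \<le> (h powr (\<theta>*p+1)/(\<theta>*p+1)) powr (1/p) * (h*((A + \<alpha>*m*B)/(\<alpha>+1))) powr (1/q)"
    using H(2) by simp
  have wm: "(\<lambda>s. (s-L) powr \<theta>) \<in> borel_measurable (lebesgue_on {L..c})"
    using wc by (simp add: continuous_imp_measurable_on_sets_lebesgue)
  have gm: "(\<lambda>s. (s-L) powr \<theta> * f' s) \<in> borel_measurable (lebesgue_on {L..c})"
    by (rule borel_measurable_times[OF wm f'm])
  have gi: "(\<lambda>s. (s-L) powr \<theta> * f' s) integrable_on {L..c}"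
    by (rule measurable_bounded_by_integrable_imp_integrable[OF gm H1]) (auto simp: abs_mult)
  have A1: "(A + \<alpha>*m*B)/(\<alpha>+1) \<ge> 0" using A B al m by simp
  have eqp: "(h powr (\<theta>*p+1)/(\<theta>*p+1)) powr (1/p) * (h*((A + \<alpha>*m*B)/(\<alpha>+1))) powr (1/q)
      = h powr (\<theta>+1) * (1/(\<theta>*p+1)) powr (1/p) * ((A + \<alpha>*m*B)/(\<alpha>+1)) powr (1/q)"
  proof -
    have "(h powr (\<theta>*p+1)/(\<theta>*p+1)) powr (1/p) = h powr (\<theta> + 1/p) * (1/(\<theta>*p+1)) powr (1/p)"
      using h pos p by (simp add: powr_divide powr_powr field_simps)
    moreover have "(h*((A + \<alpha>*m*B)/(\<alpha>+1))) powr (1/q) = h powr (1/q) * ((A + \<alpha>*m*B)/(\<alpha>+1)) powr (1/q)"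
      using h A1 powr_mult[of h "(A + \<alpha>*m*B)/(\<alpha>+1)" "1/q"] by simp
    moreover have "h powr (\<theta> + 1/p) * h powr (1/q) = h powr (\<theta>+1)"
      using pq by (simp flip: powr_add add: add.assoc)
    ultimately show ?thesis by (simp add: algebra_simps)
  qed
  show "\<bar>integral {L..c} (\<lambda>s. (s-L) powr \<theta> * f' s)\<bar>
          \<le> h powr (\<theta>+1) * (1/(\<theta>*p+1)) powr (1/p) * ((A + \<alpha>*m*B)/(\<alpha>+1)) powr (1/q)"
  proof -
    have "\<bar>integral {L..c} (\<lambda>s. (s-L) powr \<theta> * f' s)\<bar> \<le> integral {L..c} (\<lambda>s. (s-L) powr \<theta> * \<bar>f' s\<bar>)"
      using integral_norm_bound_integral[OF gi H1] by (simp add: abs_mult)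
    with H2 eqp show ?thesis by simp
  qed
  define F where "F s = (s-L) powr \<theta> / \<theta> * f s" for s
  have Fint: "((\<lambda>s. (s-L) powr (\<theta>-1) * f s + (s-L) powr \<theta> * f' s / \<theta>) has_integral (F c - F L)) {L..c}"
  proof (rule fundamental_theorem_of_calculus_interior)
    show "continuous_on {L..c} F" unfolding F_def using th
      by (intro continuous_intros continuous_on_powr' fc) (auto intro!: continuous_intros)
    fix x assume x: "x \<in> {L<..<c}"
    have d1: "((\<lambda>s. (s-L) powr \<theta> / \<theta>) has_real_derivative (\<theta> * (x - L) powr (\<theta> - 1)) / \<theta>) (at x)"
      using x by (intro DERIV_cdivide deriv_shift_powr) auto
    have d2: "(f has_real_derivative f' x) (at x)" using x by (intro der) auto
    have "(F has_real_derivative (\<theta> * (x - L) powr (\<theta> - 1)) / \<theta> * f x + f' x * ((x-L) powr \<theta> / \<theta>)) (at x)"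
      unfolding F_def by (rule DERIV_mult[OF d1 d2])
    moreover have "(\<theta> * (x - L) powr (\<theta> - 1)) / \<theta> * f x + f' x * ((x-L) powr \<theta> / \<theta>)
        = (x-L) powr (\<theta>-1) * f x + (x-L) powr \<theta> * f' x / \<theta>" using th by simp
    ultimately show "(F has_vector_derivative (x-L) powr (\<theta>-1) * f x + (x-L) powr \<theta> * f' x / \<theta>) (at x)"
      by (simp add: has_real_derivative_iff_has_vector_derivative)
  qed (use Lc in simp)
  have FcL: "F c - F L = h powr \<theta> / \<theta> * f c" unfolding F_def using hdef by simp
  have kint: "((\<lambda>s. (s-L) powr (\<theta>-1) * f s) has_integral
       (h powr \<theta> / \<theta> * f c - integral {L..c} (\<lambda>s. (s-L) powr \<theta> * f' s) / \<theta>)) {L..c}"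
  proof -
    have "((\<lambda>s. ((s-L) powr (\<theta>-1) * f s + (s-L) powr \<theta> * f' s / \<theta>) - (s-L) powr \<theta> * f' s / \<theta>) has_integral
       (h powr \<theta> / \<theta> * f c - integral {L..c} (\<lambda>s. (s-L) powr \<theta> * f' s) / \<theta>)) {L..c}"
      using Fint FcL by (intro has_integral_diff has_integral_divide integrable_integral gi) auto
    then show ?thesis by simp
  qed
  obtain M where M: "\<And>s. s \<in> {L..c} \<Longrightarrow> \<bar>f s\<bar> \<le> M"
    using compact_imp_bounded[OF compact_continuous_image[OF fc compact_Icc]]
    unfolding bounded_iff by (metis image_eqI real_norm_def)
  have kerint: "((\<lambda>s. (s-L) powr (\<theta>-1)) has_integral (h powr \<theta> / \<theta>)) {L..c}"
  proof -
    define G where "G s = (s-L) powr \<theta> / \<theta>" for s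
    have "((\<lambda>s. (s-L) powr (\<theta>-1)) has_integral (G c - G L)) {L..c}"
    proof (rule fundamental_theorem_of_calculus_interior)
      show "continuous_on {L..c} G" unfolding G_def using th
        by (intro continuous_intros continuous_on_powr') (auto intro!: continuous_intros)
      fix x assume x: "x \<in> {L<..<c}"
      have "(G has_real_derivative (\<theta> * (x - L) powr (\<theta> - 1)) / \<theta>) (at x)"
        unfolding G_def using x by (intro DERIV_cdivide deriv_shift_powr) auto
      then show "(G has_vector_derivative (x-L) powr (\<theta>-1)) (at x)"
        using th by (simp add: has_real_derivative_iff_has_vector_derivative)
    qed (use Lc in simp)
    then show ?thesis unfolding G_def using hdef by simp
  qed
  have kabs: "(\<lambda>s. (s-L) powr (\<theta>-1) * f s) absolutely_integrable_on {L..c}"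
  proof (rule measurable_bounded_by_integrable_imp_absolutely_integrable)
    show "(\<lambda>s. (s-L) powr (\<theta>-1) * f s) \<in> borel_measurable (lebesgue_on {L..c})"
      using kint by (intro integrable_imp_measurable) blast
    show "(\<lambda>s. M * (s-L) powr (\<theta>-1)) integrable_on {L..c}"
      using kerint by (intro integrable_on_mult_right) blast
    fix s assume s: "s \<in> {L..c}"
    show "norm ((s-L) powr (\<theta>-1) * f s) \<le> M * (s-L) powr (\<theta>-1)"
      using M[OF s] mult_left_mono[OF M[OF s], of "(s-L) powr (\<theta>-1)"] by (simp add: abs_mult mult.commute)
  qed auto
  have bm: "(\<lambda>s. indicator {L..c} s *\<^sub>R ((s-L) powr (\<theta>-1) * f s)) \<in> borel_measurable lborel"
  proof -
    have 1: "(\<lambda>s. indicator {L..c} s *\<^sub>R f s) \<in> borel_measurable borel"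
      by (rule borel_measurable_continuous_on_indicator[OF _ fc]) auto
    have "(\<lambda>s. (s-L) powr (\<theta>-1) * (indicator {L..c} s *\<^sub>R f s)) \<in> borel_measurable borel"
      using 1 by measurable
    then show ?thesis by (simp add: mult.left_commute)
  qed
  show SI: "set_integrable lborel {L..c} (\<lambda>s. (s-L) powr (\<theta>-1) * f s)"
    using kabs bm unfolding set_integrable_def by (simp add: integrable_completion)
  show "(LINT s:{L..c}|lborel. (s-L) powr (\<theta>-1) * f s)
          = h powr \<theta> / \<theta> * f c - integral {L..c} (\<lambda>s. (s-L) powr \<theta> * f' s) / \<theta>"
    using set_borel_integral_eq_integral(2)[OF SI] kint by (simp add: integral_unique)
qed



lemma right_piece:
  fixes f f' :: "real \<Rightarrow> real" and c R h \<theta> p q \<alpha> m A B :: real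
  assumes Lc: "c < R" and hdef: "h = R - c" and th: "\<theta> > 0"
   and p: "p > 1" and q: "q > 1" and pq: "1/p + 1/q = 1"
   and al: "0 \<le> \<alpha>" and m: "0 \<le> m" and A: "0 \<le> A" and B: "0 \<le> B"
   and der: "\<And>x. x \<in> {c..R} \<Longrightarrow> (f has_real_derivative f' x) (at x)"
   and fi: "f' integrable_on {c..R}"
   and bd: "\<And>s. s \<in> {c..R} \<Longrightarrow> \<bar>f' s\<bar> powr q \<le> m*B + pw0 ((R-s)/h) \<alpha> * (A - m*B)"
  shows "set_integrable lborel {c..R} (\<lambda>s. (R-s) powr (\<theta>-1) * f s)"
   and "(LINT s:{c..R}|lborel. (R-s) powr (\<theta>-1) * f s)
          = h powr \<theta> / \<theta> * f c + integral {c..R} (\<lambda>s. (R-s) powr \<theta> * f' s) / \<theta>"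
   and "\<bar>integral {c..R} (\<lambda>s. (R-s) powr \<theta> * f' s)\<bar>
          \<le> h powr (\<theta>+1) * (1/(\<theta>*p+1)) powr (1/p) * ((A + \<alpha>*m*B)/(\<alpha>+1)) powr (1/q)"
proof -
  have h: "h > 0" using Lc hdef by simp
  have fc: "continuous_on {c..R} f"
    by (rule continuous_at_imp_continuous_on) (use der DERIV_isCont in blast)
  have f'm: "f' \<in> borel_measurable (lebesgue_on {c..R})"
    using integrable_imp_measurable[OF fi] .
  have Pint: "((\<lambda>s. pw0 ((R-s)/h) \<alpha>) has_integral (h/(\<alpha>+1))) {c..R}"
  proof -
    define G where "G s = - (h/(\<alpha>+1) * ((R-s)/h) powr (\<alpha>+1))" for s
    have "((\<lambda>s. pw0 ((R-s)/h) \<alpha>) has_integral (G R - G c)) {c..R}"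
    proof (rule fundamental_theorem_of_calculus_interior)
      show "continuous_on {c..R} G" unfolding G_def using al h
        by (intro continuous_intros continuous_on_powr') (auto intro!: continuous_intros)
      fix x assume x: "x \<in> {c<..<R}"
      have d: "((\<lambda>s. (R-s)/h) has_real_derivative -1/h) (at x)"
        using h by (auto intro!: derivative_eq_intros)
      have "(G has_real_derivative - (h/(\<alpha>+1) * ((\<alpha>+1) * ((R-x)/h) powr (\<alpha>+1 - of_nat 1) * (-1/h)))) (at x)"
        unfolding G_def using x h by (intro DERIV_minus DERIV_cmult DERIV_fun_powr[OF d]) auto
      moreover have "- (h/(\<alpha>+1) * ((\<alpha>+1) * ((R-x)/h) powr (\<alpha>+1 - of_nat 1) * (-1/h))) = pw0 ((R-x)/h) \<alpha>"
        using x h al by (simp add: pw0_def)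
      ultimately show "(G has_vector_derivative pw0 ((R-x)/h) \<alpha>) (at x)"
        by (simp add: has_real_derivative_iff_has_vector_derivative)
    qed (use Lc in simp)
    moreover have "G R - G c = h/(\<alpha>+1)" unfolding G_def using h al hdef by simp
    ultimately show ?thesis by simp
  qed
  define Bd where "Bd s = m*B + pw0 ((R-s)/h) \<alpha> * (A - m*B)" for s
  have Bdint: "(Bd has_integral (h*((A + \<alpha>*m*B)/(\<alpha>+1)))) {c..R}"
  proof -
    have cst: "((\<lambda>s. m*B) has_integral ((R-c)*(m*B))) {c..R}"
      using has_integral_const_real[of "m*B" c R] Lc by simp
    have "(Bd has_integral ((R-c)*(m*B) + h/(\<alpha>+1) * (A - m*B))) {c..R}"
      unfolding Bd_def by (intro has_integral_add cst has_integral_mult_left Pint)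
    moreover have "(R-c)*(m*B) + h/(\<alpha>+1) * (A - m*B) = h*((A + \<alpha>*m*B)/(\<alpha>+1))"
      using Lc al by (simp add: hdef field_simps)
    ultimately show ?thesis by simp
  qed
  have qm: "(\<lambda>s. \<bar>f' s\<bar> powr q) \<in> borel_measurable (lebesgue_on {c..R})"
    using f'm by measurable
  have qint: "(\<lambda>s. \<bar>f' s\<bar> powr q) integrable_on {c..R}"
    by (rule measurable_bounded_by_integrable_imp_integrable[OF qm, of Bd])
       (use Bdint bd in \<open>auto simp: Bd_def\<close>)
  have qle: "integral {c..R} (\<lambda>s. \<bar>f' s\<bar> powr q) \<le> h*((A + \<alpha>*m*B)/(\<alpha>+1))"
  proof -
    have "integral {c..R} (\<lambda>s. \<bar>f' s\<bar> powr q) \<le> integral {c..R} Bd"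
      by (rule integral_le[OF qint]) (use Bdint bd in \<open>auto simp: Bd_def\<close>)
    then show ?thesis using Bdint by (simp add: integral_unique)
  qed
  have pos: "\<theta>*p > 0" using th p by simp
  have Wint: "((\<lambda>s. ((R-s) powr \<theta>) powr p) has_integral (h powr (\<theta>*p+1)/(\<theta>*p+1))) {c..R}"
  proof -
    define G where "G s = - ((R-s) powr (\<theta>*p+1)/(\<theta>*p+1))" for s
    have "((\<lambda>s. ((R-s) powr \<theta>) powr p) has_integral (G R - G c)) {c..R}"
    proof (rule fundamental_theorem_of_calculus_interior)
      show "continuous_on {c..R} G" unfolding G_def using pos
        by (intro continuous_intros continuous_on_powr') (auto intro!: continuous_intros)
      fix x assume x: "x \<in> {c<..<R}"
      have "(G has_real_derivative - ((- ((\<theta>*p+1) * (R-x) powr (\<theta>*p+1-1))) / (\<theta>*p+1))) (at x)"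
        unfolding G_def using x by (intro DERIV_minus DERIV_cdivide deriv_refl_powr) auto
      moreover have "- ((- ((\<theta>*p+1) * (R-x) powr (\<theta>*p+1-1))) / (\<theta>*p+1)) = ((R-x) powr \<theta>) powr p"
        using pos by (simp add: powr_powr)
      ultimately show "(G has_vector_derivative ((R-x) powr \<theta>) powr p) (at x)"
        by (simp add: has_real_derivative_iff_has_vector_derivative)
    qed (use Lc in simp)
    moreover have "G R - G c = h powr (\<theta>*p+1)/(\<theta>*p+1)" unfolding G_def using pos hdef by simp
    ultimately show ?thesis by simp
  qed
  have wc: "continuous_on {c..R} (\<lambda>s. (R-s) powr \<theta>)"
    using th by (intro continuous_on_powr') (auto intro!: continuous_intros)
  have U: "h powr (\<theta>*p+1)/(\<theta>*p+1) > 0" using h pos by simp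
  note H = holder_piece[OF p q pq Wint U _ wc f'm qint qle]
  have H1: "(\<lambda>s. (R-s) powr \<theta> * \<bar>f' s\<bar>) integrable_on {c..R}" using H(1) by simp
  have H2: "integral {c..R} (\<lambda>s. (R-s) powr \<theta> * \<bar>f' s\<bar>)
      \<le> (h powr (\<theta>*p+1)/(\<theta>*p+1)) powr (1/p) * (h*((A + \<alpha>*m*B)/(\<alpha>+1))) powr (1/q)"
    using H(2) by simp
  have wm: "(\<lambda>s. (R-s) powr \<theta>) \<in> borel_measurable (lebesgue_on {c..R})"
    using wc by (simp add: continuous_imp_measurable_on_sets_lebesgue)
  have gm: "(\<lambda>s. (R-s) powr \<theta> * f' s) \<in> borel_measurable (lebesgue_on {c..R})"
    by (rule borel_measurable_times[OF wm f'm])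
  have gi: "(\<lambda>s. (R-s) powr \<theta> * f' s) integrable_on {c..R}"
    by (rule measurable_bounded_by_integrable_imp_integrable[OF gm H1]) (auto simp: abs_mult)
  have A1: "(A + \<alpha>*m*B)/(\<alpha>+1) \<ge> 0" using A B al m by simp
  have eqp: "(h powr (\<theta>*p+1)/(\<theta>*p+1)) powr (1/p) * (h*((A + \<alpha>*m*B)/(\<alpha>+1))) powr (1/q)
      = h powr (\<theta>+1) * (1/(\<theta>*p+1)) powr (1/p) * ((A + \<alpha>*m*B)/(\<alpha>+1)) powr (1/q)"
  proof -
    have "(h powr (\<theta>*p+1)/(\<theta>*p+1)) powr (1/p) = h powr (\<theta> + 1/p) * (1/(\<theta>*p+1)) powr (1/p)"
      using h pos p by (simp add: powr_divide powr_powr field_simps)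
    moreover have "(h*((A + \<alpha>*m*B)/(\<alpha>+1))) powr (1/q) = h powr (1/q) * ((A + \<alpha>*m*B)/(\<alpha>+1)) powr (1/q)"
      using h A1 powr_mult[of h "(A + \<alpha>*m*B)/(\<alpha>+1)" "1/q"] by simp
    moreover have "h powr (\<theta> + 1/p) * h powr (1/q) = h powr (\<theta>+1)"
      using pq by (simp flip: powr_add add: add.assoc)
    ultimately show ?thesis by (simp add: algebra_simps)
  qed
  show "\<bar>integral {c..R} (\<lambda>s. (R-s) powr \<theta> * f' s)\<bar>
          \<le> h powr (\<theta>+1) * (1/(\<theta>*p+1)) powr (1/p) * ((A + \<alpha>*m*B)/(\<alpha>+1)) powr (1/q)"
  proof -
    have "\<bar>integral {c..R} (\<lambda>s. (R-s) powr \<theta> * f' s)\<bar> \<le> integral {c..R} (\<lambda>s. (R-s) powr \<theta> * \<bar>f' s\<bar>)"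
      using integral_norm_bound_integral[OF gi H1] by (simp add: abs_mult)
    with H2 eqp show ?thesis by simp
  qed
  define F where "F s = - ((R-s) powr \<theta> / \<theta>) * f s" for s
  have Fint: "((\<lambda>s. (R-s) powr (\<theta>-1) * f s - (R-s) powr \<theta> * f' s / \<theta>) has_integral (F R - F c)) {c..R}"
  proof (rule fundamental_theorem_of_calculus_interior)
    show "continuous_on {c..R} F" unfolding F_def using th
      by (intro continuous_intros continuous_on_powr' fc) (auto intro!: continuous_intros)
    fix x assume x: "x \<in> {c<..<R}"
    have d1: "((\<lambda>s. - ((R-s) powr \<theta> / \<theta>)) has_real_derivative - ((- (\<theta> * (R - x) powr (\<theta> - 1))) / \<theta>)) (at x)"
      using x by (intro DERIV_minus DERIV_cdivide deriv_refl_powr) auto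
    have d2: "(f has_real_derivative f' x) (at x)" using x by (intro der) auto
    have "(F has_real_derivative - ((- (\<theta> * (R - x) powr (\<theta> - 1))) / \<theta>) * f x + f' x * (- ((R-x) powr \<theta> / \<theta>))) (at x)"
      unfolding F_def by (rule DERIV_mult[OF d1 d2])
    moreover have "- ((- (\<theta> * (R - x) powr (\<theta> - 1))) / \<theta>) * f x + f' x * (- ((R-x) powr \<theta> / \<theta>))
        = (R-x) powr (\<theta>-1) * f x - (R-x) powr \<theta> * f' x / \<theta>" using th by simp
    ultimately show "(F has_vector_derivative (R-x) powr (\<theta>-1) * f x - (R-x) powr \<theta> * f' x / \<theta>) (at x)"
      by (simp add: has_real_derivative_iff_has_vector_derivative)
  qed (use Lc in simp)
  have FcL: "F R - F c = h powr \<theta> / \<theta> * f c" unfolding F_def using hdef by simp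
  have kint: "((\<lambda>s. (R-s) powr (\<theta>-1) * f s) has_integral
       (h powr \<theta> / \<theta> * f c + integral {c..R} (\<lambda>s. (R-s) powr \<theta> * f' s) / \<theta>)) {c..R}"
  proof -
    have "((\<lambda>s. ((R-s) powr (\<theta>-1) * f s - (R-s) powr \<theta> * f' s / \<theta>) + (R-s) powr \<theta> * f' s / \<theta>) has_integral
       (h powr \<theta> / \<theta> * f c + integral {c..R} (\<lambda>s. (R-s) powr \<theta> * f' s) / \<theta>)) {c..R}"
      using Fint FcL by (intro has_integral_add has_integral_divide integrable_integral gi) auto
    then show ?thesis by simp
  qed
  obtain M where M: "\<And>s. s \<in> {c..R} \<Longrightarrow> \<bar>f s\<bar> \<le> M"
    using compact_imp_bounded[OF compact_continuous_image[OF fc compact_Icc]]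
    unfolding bounded_iff by (metis image_eqI real_norm_def)
  have kerint: "((\<lambda>s. (R-s) powr (\<theta>-1)) has_integral (h powr \<theta> / \<theta>)) {c..R}"
  proof -
    define G where "G s = - ((R-s) powr \<theta> / \<theta>)" for s
    have "((\<lambda>s. (R-s) powr (\<theta>-1)) has_integral (G R - G c)) {c..R}"
    proof (rule fundamental_theorem_of_calculus_interior)
      show "continuous_on {c..R} G" unfolding G_def using th
        by (intro continuous_intros continuous_on_powr') (auto intro!: continuous_intros)
      fix x assume x: "x \<in> {c<..<R}"
      have "(G has_real_derivative - ((- (\<theta> * (R - x) powr (\<theta> - 1))) / \<theta>)) (at x)"
        unfolding G_def using x by (intro DERIV_minus DERIV_cdivide deriv_refl_powr) auto
      then show "(G has_vector_derivative (R-x) powr (\<theta>-1)) (at x)"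
        using th by (simp add: has_real_derivative_iff_has_vector_derivative)
    qed (use Lc in simp)
    then show ?thesis unfolding G_def using hdef by simp
  qed
  have kabs: "(\<lambda>s. (R-s) powr (\<theta>-1) * f s) absolutely_integrable_on {c..R}"
  proof (rule measurable_bounded_by_integrable_imp_absolutely_integrable)
    show "(\<lambda>s. (R-s) powr (\<theta>-1) * f s) \<in> borel_measurable (lebesgue_on {c..R})"
      using kint by (intro integrable_imp_measurable) blast
    show "(\<lambda>s. M * (R-s) powr (\<theta>-1)) integrable_on {c..R}"
      using kerint by (intro integrable_on_mult_right) blast
    fix s assume s: "s \<in> {c..R}"
    show "norm ((R-s) powr (\<theta>-1) * f s) \<le> M * (R-s) powr (\<theta>-1)"
      using M[OF s] mult_left_mono[OF M[OF s], of "(R-s) powr (\<theta>-1)"] by (simp add: abs_mult mult.commute)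
  qed auto
  have bm: "(\<lambda>s. indicator {c..R} s *\<^sub>R ((R-s) powr (\<theta>-1) * f s)) \<in> borel_measurable lborel"
  proof -
    have 1: "(\<lambda>s. indicator {c..R} s *\<^sub>R f s) \<in> borel_measurable borel"
      by (rule borel_measurable_continuous_on_indicator[OF _ fc]) auto
    have "(\<lambda>s. (R-s) powr (\<theta>-1) * (indicator {c..R} s *\<^sub>R f s)) \<in> borel_measurable borel"
      using 1 by measurable
    then show ?thesis by (simp add: mult.left_commute)
  qed
  show SI: "set_integrable lborel {c..R} (\<lambda>s. (R-s) powr (\<theta>-1) * f s)"
    using kabs bm unfolding set_integrable_def by (simp add: integrable_completion)
  show "(LINT s:{c..R}|lborel. (R-s) powr (\<theta>-1) * f s)
          = h powr \<theta> / \<theta> * f c + integral {c..R} (\<lambda>s. (R-s) powr \<theta> * f' s) / \<theta>"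
    using set_borel_integral_eq_integral(2)[OF SI] kint by (simp add: integral_unique)
qed



lemma final_alg:
  fixes G t H x Il Ir :: real
  assumes "G \<noteq> 0" "t \<noteq> 0" "H \<noteq> 0"
  shows "t*G/(2*H) * ((1/G)*(H/t*x - Il/t) + (1/G)*(H/t*x + Ir/t)) = x + (Ir - Il)/(2*H)"
  using assms by (simp add: field_simps)

theorem mainTheorem12:
  fixes f f' :: "real \<Rightarrow> real" and I :: "real set"
    and m \<alpha> a b q p \<theta> :: real
  assumes hq: "q > 1" and hp: "p = q / (q - 1)"
    and hI: "is_interval I" "I \<subseteq> {0..}"
    and hderiv: "\<forall>x\<in>interior I. (f has_real_derivative f' x) (at x)"
    and hm: "0 < m" "m \<le> 1"
    and h\<alpha>: "0 \<le> \<alpha>" "\<alpha> \<le> 1"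
    and hab: "a < b" "m * a \<in> interior I" "b \<in> interior I"
    and hint: "set_integrable lborel {m * a..m * b} f'"
    and hconv: "alpha_m_convex \<alpha> m {m * a..b} (\<lambda>x. \<bar>f' x\<bar> powr q)"
    and h\<theta>: "\<theta> > 0"
  shows "\<bar>f (m * (a + b) / 2)
           - Gamma (\<theta> + 1) * 2 powr (\<theta> - 1) / (m powr \<theta> * (b - a) powr \<theta>)
             * (RL_minus \<theta> (m * (a + b) / 2) f (m * a) + RL_plus \<theta> (m * (a + b) / 2) f (m * b))\<bar>
         \<le> m * (b - a) / 4 * (1 / (\<theta> * p + 1)) powr (1 / p)
           * (((\<bar>f' (m * (a + b) / 2)\<bar> powr q + \<alpha> * m * \<bar>f' a\<bar> powr q) / (\<alpha> + 1)) powr (1 / q)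
            + ((\<bar>f' (m * (a + b) / 2)\<bar> powr q + \<alpha> * m * \<bar>f' b\<bar> powr q) / (\<alpha> + 1)) powr (1 / q))"
proof -
  define L where "L = m * a"
  define R where "R = m * b"
  define c where "c = m * (a + b) / 2"
  define h where "h = m * (b - a) / 2"
  have p1: "p > 1" unfolding hp using hq by (simp add: less_divide_eq)
  have pq: "1/p + 1/q = 1" unfolding hp using hq by (simp add: field_simps)
  have a0: "a \<ge> 0"
  proof -
    have "m * a \<in> I" using hab(2) interior_subset by blast
    then have "m * a \<ge> 0" using hI(2) by auto
    then show ?thesis using hm by (simp add: zero_le_mult_iff)
  qed
  have b0: "b > 0" using a0 hab by simp
  have h0: "h > 0" using hm hab by (simp add: h_def)
  have hL: "h = c - L" and hR: "h = R - c" by (simp_all add: h_def c_def L_def R_def field_simps)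
  have Lc: "L < c" and cR: "c < R" using h0 hL hR by simp_all
  have Rb: "R \<le> b" using hm b0 mult_left_le_one_le[of b m] by (simp add: R_def)
  have ma: "m * a \<le> a" using hm a0 mult_left_le_one_le[of a m] by simp
  have cb: "c \<le> b"
  proof -
    have "c \<le> (a + b)/2" unfolding c_def using hm a0 b0 mult_left_le_one_le[of "a+b" m] by simp
    then show ?thesis using hab by simp
  qed
  have intI: "is_interval (interior I)"
    using hI(1) by (simp add: is_interval_convex_1)
  have sub: "{L..b} \<subseteq> interior I"
  proof
    fix x assume "x \<in> {L..b}"
    then show "x \<in> interior I"
      using intI[unfolded is_interval_1, rule_format, OF hab(2) hab(3), of x] by (simp add: L_def)
  qed
  have der: "\<And>x. x \<in> {L..R} \<Longrightarrow> (f has_real_derivative f' x) (at x)"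
  proof -
    fix x assume "x \<in> {L..R}"
    then have "x \<in> interior I" using sub Rb by (meson atLeastAtMost_iff order_trans subsetD)
    then show "(f has_real_derivative f' x) (at x)" using hderiv by blast
  qed
  have fiL: "f' integrable_on {L..c}"
    by (rule set_borel_integral_eq_integral(1), rule set_integrable_subset[OF hint])
       (use cR in \<open>auto simp: L_def R_def\<close>)
  have fiR: "f' integrable_on {c..R}"
    by (rule set_borel_integral_eq_integral(1), rule set_integrable_subset[OF hint])
       (use Lc in \<open>auto simp: L_def R_def\<close>)
  have conv: "\<And>X Y t. X \<in> {m*a..b} \<Longrightarrow> Y \<in> {m*a..b} \<Longrightarrow> t \<in> {0..1} \<Longrightarrow> t * X + m * (1 - t) * Y \<in> {m*a..b} \<Longrightarrow>
      \<bar>f' (t * X + m * (1 - t) * Y)\<bar> powr q \<le> pw0 t \<alpha> * \<bar>f' X\<bar> powr q + m * (1 - pw0 t \<alpha>) * \<bar>f' Y\<bar> powr q"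
    using hconv unfolding alpha_m_convex_def by blast
  have cK: "c \<in> {m*a..b}" using Lc cb by (simp add: L_def)
  have bdL: "\<bar>f' s\<bar> powr q \<le> m * \<bar>f' a\<bar> powr q + pw0 ((s-L)/h) \<alpha> * (\<bar>f' c\<bar> powr q - m * \<bar>f' a\<bar> powr q)"
    if s: "s \<in> {L..c}" for s
  proof -
    define t where "t = (s-L)/h"
    have t: "t \<in> {0..1}" using s h0 hL by (auto simp: t_def field_simps)
    have st: "t * c + m * (1 - t) * a = s"
    proof -
      have "t*(c-L) = s - L" using h0 hL by (simp add: t_def)
      then show ?thesis unfolding L_def by (simp add: algebra_simps)
    qed
    have "s \<in> {m*a..b}" using s cb by (auto simp: L_def)
    then have "\<bar>f' s\<bar> powr q \<le> pw0 t \<alpha> * \<bar>f' c\<bar> powr q + m * (1 - pw0 t \<alpha>) * \<bar>f' a\<bar> powr q"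
      using conv[OF cK _ t, of a] ma hab(1) st by auto
    then show ?thesis by (simp add: t_def algebra_simps)
  qed
  have bdR: "\<bar>f' s\<bar> powr q \<le> m * \<bar>f' b\<bar> powr q + pw0 ((R-s)/h) \<alpha> * (\<bar>f' c\<bar> powr q - m * \<bar>f' b\<bar> powr q)"
    if s: "s \<in> {c..R}" for s
  proof -
    define t where "t = (R-s)/h"
    have t: "t \<in> {0..1}" using s h0 hR by (auto simp: t_def field_simps)
    have st: "t * c + m * (1 - t) * b = s"
    proof -
      have "t*(R-c) = R - s" using h0 hR by (simp add: t_def)
      then show ?thesis unfolding R_def by (simp add: algebra_simps)
    qed
    have "s \<in> {m*a..b}" using s Lc Rb by (auto simp: L_def)
    then have "\<bar>f' s\<bar> powr q \<le> pw0 t \<alpha> * \<bar>f' c\<bar> powr q + m * (1 - pw0 t \<alpha>) * \<bar>f' b\<bar> powr q"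
      using conv[OF cK _ t, of b] ma hab(1) st by auto
    then show ?thesis by (simp add: t_def algebra_simps)
  qed
  have derL: "\<And>x. x \<in> {L..c} \<Longrightarrow> (f has_real_derivative f' x) (at x)" using der cR by auto
  have derR: "\<And>x. x \<in> {c..R} \<Longrightarrow> (f has_real_derivative f' x) (at x)" using der Lc by auto
  note LP = left_piece[OF Lc hL h\<theta> p1 hq pq h\<alpha>(1) less_imp_le[OF hm(1)] powr_ge_zero powr_ge_zero derL fiL bdL]
  note RP = right_piece[OF cR hR h\<theta> p1 hq pq h\<alpha>(1) less_imp_le[OF hm(1)] powr_ge_zero powr_ge_zero derR fiR bdR]
  define Il where "Il = integral {L..c} (\<lambda>s. (s-L) powr \<theta> * f' s)"
  define Ir where "Ir = integral {c..R} (\<lambda>s. (R-s) powr \<theta> * f' s)"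
  define X1 where "X1 = ((\<bar>f' c\<bar> powr q + \<alpha> * m * \<bar>f' a\<bar> powr q) / (\<alpha> + 1)) powr (1 / q)"
  define X2 where "X2 = ((\<bar>f' c\<bar> powr q + \<alpha> * m * \<bar>f' b\<bar> powr q) / (\<alpha> + 1)) powr (1 / q)"
  define Cp where "Cp = (1 / (\<theta> * p + 1)) powr (1 / p)"
  have Gpos: "Gamma \<theta> > 0" using h\<theta> by (rule Gamma_real_pos)
  have Gp1: "Gamma (\<theta> + 1) = \<theta> * Gamma \<theta>"
    using h\<theta> by (intro Gamma_plus1) (auto elim!: nonpos_Ints_cases)
  have RLm: "RL_minus \<theta> c f L = (1/Gamma \<theta>) * (h powr \<theta> / \<theta> * f c - Il/\<theta>)"
    unfolding RL_minus_def Il_def using LP(2) by simp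
  have RLp: "RL_plus \<theta> c f R = (1/Gamma \<theta>) * (h powr \<theta> / \<theta> * f c + Ir/\<theta>)"
    unfolding RL_plus_def Ir_def using RP(2) by simp
  have hpw: "h powr \<theta> = m powr \<theta> * (b - a) powr \<theta> / 2 powr \<theta>"
    unfolding h_def using hm hab by (simp add: powr_divide powr_mult)
  have two: "2 powr (\<theta> - 1) = 2 powr \<theta> / 2" by (simp add: powr_diff)
  have hth: "h powr \<theta> > 0" using h0 by simp
  have K: "Gamma (\<theta> + 1) * 2 powr (\<theta> - 1) / (m powr \<theta> * (b - a) powr \<theta>) = \<theta> * Gamma \<theta> / (2 * h powr \<theta>)"
    unfolding Gp1 two hpw using hm hab by (simp add: field_simps)
  have E: "Gamma (\<theta> + 1) * 2 powr (\<theta> - 1) / (m powr \<theta> * (b - a) powr \<theta>) * (RL_minus \<theta> c f L + RL_plus \<theta> c f R)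
      = f c + (Ir - Il) / (2 * h powr \<theta>)"
  proof -
    have g0: "Gamma \<theta> \<noteq> 0" "\<theta> * Gamma \<theta> \<noteq> 0" "h powr \<theta> \<noteq> 0"
      using Gpos hth h\<theta> by (metis less_irrefl, metis less_irrefl mult_pos_pos, metis less_irrefl)
    show ?thesis unfolding K RLm RLp using final_alg[OF g0(1) _ g0(3), of \<theta>] h\<theta> by simp
  qed
  have bl: "\<bar>Il\<bar> \<le> h powr (\<theta>+1) * Cp * X1" using LP(3) unfolding Il_def Cp_def X1_def by simp
  have br: "\<bar>Ir\<bar> \<le> h powr (\<theta>+1) * Cp * X2" using RP(3) unfolding Ir_def Cp_def X2_def by simp
  have hp1: "h powr (\<theta>+1) = h powr \<theta> * h" using h0 by (simp add: powr_add)
  have "\<bar>f c - (f c + (Ir - Il) / (2 * h powr \<theta>))\<bar> = \<bar>Il - Ir\<bar> / (2 * h powr \<theta>)"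
    using hth by (simp add: abs_minus_commute)
  also have "\<dots> \<le> (\<bar>Il\<bar> + \<bar>Ir\<bar>) / (2 * h powr \<theta>)"
    using hth by (intro divide_right_mono) auto
  also have "\<dots> \<le> (h powr (\<theta>+1) * Cp * X1 + h powr (\<theta>+1) * Cp * X2) / (2 * h powr \<theta>)"
    using hth bl br by (intro divide_right_mono) auto
  also have "\<dots> = m * (b - a) / 4 * Cp * (X1 + X2)"
    unfolding hp1 using hth by (simp add: h_def field_simps)
  finally have fin: "\<bar>f c - (f c + (Ir - Il) / (2 * h powr \<theta>))\<bar> \<le> m * (b - a) / 4 * Cp * (X1 + X2)" .
  have fin2: "\<bar>f c - Gamma (\<theta> + 1) * 2 powr (\<theta> - 1) / (m powr \<theta> * (b - a) powr \<theta>) * (RL_minus \<theta> c f L + RL_plus \<theta> c f R)\<bar>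
     \<le> m * (b - a) / 4 * Cp * (X1 + X2)"
    using fin by (simp only: E)
  then show ?thesis unfolding c_def L_def R_def X1_def X2_def Cp_def .
qed

end
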